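(* Let $G$ be a group of order $3^5$ generated by $f_1,\dots,f_5$ with $f_5\in Z(G)$, satisfying the commutator relations $[f_2,f_1]=f_3$, $[f_3,f_1]=f_4$, $[f_4,f_1]=[f_3,f_2]=f_5$, $[f_4,f_2]=[f_4,f_3]=1$, together with one of the following three sets of power relations: (a) $f_1^3=f_4^3=f_5^3=1$, $f_2^3=f_4^{-1}$, $f_3^3=f_5^{-1}$; (b) $f_4^3=f_5^3=1$, $f_1^3=f_5$, $f_2^3=f_4^{-1}$, $f_3^3=f_5^{-1}$; (c) $f_4^3=f_5^3=1$, $f_1^3=f_3^3=f_5^{-1}$, $f_2^3=f_4^{-1}$. Then $B_0(G)\neq 0$. In case (a), moreover $G/[G,G]\cong C_3\times C_3$.
   Context: $[g,h]=g^{-1}h^{-1}gh$; $Z(G)$ is the center. $B_0(G)=\bigcap_A \ker\{\mathrm{res}^G_A : H^2(G,\mathbb{Q}/\mathbb{Z})\to H^2(A,\mathbb{Q}/\mathbb{Z})\}$, where $A$ runs over all bicyclic subgroups of $G$ (cyclic groups or direct products of two cyclic groups), with trivial action on $\mathbb{Q}/\mathbb{Z}$. (These are the groups numbered 28, 29, 30 among groups of order 243 in the GAP SmallGroups library.) *)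

theory Defs
  imports "HOL-Algebra.Algebra"
begin

definition comm :: "('a, 'b) monoid_scheme \<Rightarrow> 'a \<Rightarrow> 'a \<Rightarrow> 'a" where
  "comm G g h = inv\<^bsub>G\<^esub> g \<otimes>\<^bsub>G\<^esub> inv\<^bsub>G\<^esub> h \<otimes>\<^bsub>G\<^esub> g \<otimes>\<^bsub>G\<^esub> h"

definition center :: "('a, 'b) monoid_scheme \<Rightarrow> 'a set" where
  "center G = {z \<in> carrier G. \<forall>g \<in> carrier G. z \<otimes>\<^bsub>G\<^esub> g = g \<otimes>\<^bsub>G\<^esub> z}"

(* Bicyclic subgroup: cyclic, or internal direct product of two cyclic subgroups
   (the cyclic case is b = 1). *)
definition bicyclic :: "('a, 'b) monoid_scheme \<Rightarrow> 'a set \<Rightarrow> bool" where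
  "bicyclic G A \<longleftrightarrow> (\<exists>a \<in> carrier G. \<exists>b \<in> carrier G.
      a \<otimes>\<^bsub>G\<^esub> b = b \<otimes>\<^bsub>G\<^esub> a \<and>
      generate G {a} \<inter> generate G {b} = {\<one>\<^bsub>G\<^esub>} \<and>
      A = generate G {a} <#>\<^bsub>G\<^esub> generate G {b})"

(* 2-cochains with values in Q/Z are represented by rational-valued functions,
   taken modulo Z pointwise.  Trivial action on Q/Z. *)
definition cocycle2 :: "('a, 'b) monoid_scheme \<Rightarrow> ('a \<Rightarrow> 'a \<Rightarrow> rat) \<Rightarrow> bool" where
  "cocycle2 G c \<longleftrightarrow> (\<forall>g \<in> carrier G. \<forall>h \<in> carrier G. \<forall>k \<in> carrier G.
      c h k - c (g \<otimes>\<^bsub>G\<^esub> h) k + c g (h \<otimes>\<^bsub>G\<^esub> k) - c g h \<in> \<int>)"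

(* c restricted to the subgroup A is a coboundary (in Q/Z) on A, i.e. its class in
   H^2(A,Q/Z) is zero; with A = carrier G this says the class in H^2(G,Q/Z) is zero. *)
definition coboundary_on :: "('a, 'b) monoid_scheme \<Rightarrow> 'a set \<Rightarrow> ('a \<Rightarrow> 'a \<Rightarrow> rat) \<Rightarrow> bool" where
  "coboundary_on G A c \<longleftrightarrow> (\<exists>f :: 'a \<Rightarrow> rat. \<forall>g \<in> A. \<forall>h \<in> A.
      c g h - (f h - f (g \<otimes>\<^bsub>G\<^esub> h) + f g) \<in> \<int>)"

definition B0_nontrivial :: "('a, 'b) monoid_scheme \<Rightarrow> bool" where
  "B0_nontrivial G \<longleftrightarrow> (\<exists>c. cocycle2 G c \<and> \<not> coboundary_on G (carrier G) c \<and>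
      (\<forall>A. subgroup A G \<and> bicyclic G A \<longrightarrow> coboundary_on G A c))"

end

theory Submission
  imports Defs
begin

lemma (in group) commute_pow:
  assumes "x \<in> carrier G" "y \<in> carrier G" "x \<otimes> y = y \<otimes> x"
  shows "x [^] (n::nat) \<otimes> y = y \<otimes> x [^] n"
proof (induction n)
  case 0 then show ?case using assms by simp
next
  case (Suc n)
  have "x [^] Suc n \<otimes> y = x [^] n \<otimes> (x \<otimes> y)" using assms by (simp add: m_assoc)
  also have "\<dots> = (x [^] n \<otimes> y) \<otimes> x" using assms by (simp add: m_assoc)
  also have "\<dots> = y \<otimes> x [^] Suc n" using assms Suc by (simp add: m_assoc)
  finally show ?case .
qed

lemma (in group) commute_pow2:
  assumes "x \<in> carrier G" "y \<in> carrier G" "x \<otimes> y = y \<otimes> x"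
  shows "x [^] (n::nat) \<otimes> y [^] (m::nat) = y [^] m \<otimes> x [^] n"
proof -
  have "x [^] n \<otimes> y = y \<otimes> x [^] n" using commute_pow assms by blast
  then have "y \<otimes> x [^] n = x [^] n \<otimes> y" by simp
  then have "y [^] m \<otimes> x [^] n = x [^] n \<otimes> y [^] m" using commute_pow assms by blast
  then show ?thesis by simp
qed

locale G5 = group G for G (structure) +
  fixes f1 f2 f3 f4 f5 :: 'a and e :: nat
  assumes c1: "f1 \<in> carrier G" and c2: "f2 \<in> carrier G" and c3: "f3 \<in> carrier G"
    and c4: "f4 \<in> carrier G" and c5: "f5 \<in> carrier G"
    and R21: "f2 \<otimes> f1 = f1 \<otimes> (f2 \<otimes> f3)"
    and R31: "f3 \<otimes> f1 = f1 \<otimes> (f3 \<otimes> f4)"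
    and R41: "f4 \<otimes> f1 = f1 \<otimes> (f4 \<otimes> f5)"
    and R32: "f3 \<otimes> f2 = f2 \<otimes> (f3 \<otimes> f5)"
    and R42: "f4 \<otimes> f2 = f2 \<otimes> f4"
    and R43: "f4 \<otimes> f3 = f3 \<otimes> f4"
    and Z5: "\<And>x. x \<in> carrier G \<Longrightarrow> f5 \<otimes> x = x \<otimes> f5"
    and P1: "f1 [^] (3::nat) = f5 [^] e"
    and P2: "f2 [^] (3::nat) = f4 [^] (2::nat)"
    and P3: "f3 [^] (3::nat) = f5 [^] (2::nat)"
    and P4: "f4 [^] (3::nat) = \<one>"
    and P5: "f5 [^] (3::nat) = \<one>"
begin

lemmas cs = c1 c2 c3 c4 c5

lemma Z5k: "x \<in> carrier G \<Longrightarrow> f5 [^] (k::nat) \<otimes> x = x \<otimes> f5 [^] k"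
  using commute_pow[OF c5 _ Z5] by blast

lemma Z5k_r: "x \<in> carrier G \<Longrightarrow> r \<in> carrier G \<Longrightarrow> f5 [^] (k::nat) \<otimes> (x \<otimes> r) = x \<otimes> (f5 [^] k \<otimes> r)"
  using Z5k by (metis m_assoc nat_pow_closed c5)

lemma f5_merge: "f5 [^] (k::nat) \<otimes> f5 [^] (l::nat) = f5 [^] (k + l)"
  using c5 by (simp add: nat_pow_mult)

lemma f5_merge_r: "r \<in> carrier G \<Longrightarrow> f5 [^] (k::nat) \<otimes> (f5 [^] (l::nat) \<otimes> r) = f5 [^] (k + l) \<otimes> r"
  using c5 by (simp add: nat_pow_mult m_assoc[symmetric])

lemma f4f3k: "f4 [^] (k::nat) \<otimes> f3 = f3 \<otimes> f4 [^] k" using commute_pow[OF c4 c3 R43] .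
lemma f4f2k: "f4 [^] (k::nat) \<otimes> f2 = f2 \<otimes> f4 [^] k" using commute_pow[OF c4 c2 R42] .

lemma L41k: "f4 [^] (k::nat) \<otimes> f1 = f1 \<otimes> (f4 [^] k \<otimes> f5 [^] k)"
proof (induction k)
  case 0 then show ?case using cs by simp
next
  case (Suc k)
  have "f4 [^] Suc k \<otimes> f1 = f4 [^] k \<otimes> (f4 \<otimes> f1)" using cs by (simp add: m_assoc)
  also have "\<dots> = (f4 [^] k \<otimes> f1) \<otimes> (f4 \<otimes> f5)" using cs by (simp add: R41 m_assoc)
  also have "\<dots> = f1 \<otimes> (f4 [^] k \<otimes> (f5 [^] k \<otimes> f4) \<otimes> f5)" using cs Suc by (simp add: m_assoc)
  also have "\<dots> = f1 \<otimes> (f4 [^] Suc k \<otimes> f5 [^] Suc k)" using cs by (simp add: Z5k m_assoc)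
  finally show ?case .
qed

lemma L31k: "f3 [^] (k::nat) \<otimes> f1 = f1 \<otimes> (f3 [^] k \<otimes> f4 [^] k)"
proof (induction k)
  case 0 then show ?case using cs by simp
next
  case (Suc k)
  have "f3 [^] Suc k \<otimes> f1 = f3 [^] k \<otimes> (f3 \<otimes> f1)" using cs by (simp add: m_assoc)
  also have "\<dots> = (f3 [^] k \<otimes> f1) \<otimes> (f3 \<otimes> f4)" using cs by (simp add: R31 m_assoc)
  also have "\<dots> = f1 \<otimes> (f3 [^] k \<otimes> (f4 [^] k \<otimes> f3) \<otimes> f4)" using cs Suc by (simp add: m_assoc)
  also have "\<dots> = f1 \<otimes> (f3 [^] Suc k \<otimes> f4 [^] Suc k)" using cs by (simp add: f4f3k m_assoc)
  finally show ?case .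
qed

lemma L32k: "f3 [^] (k::nat) \<otimes> f2 = f2 \<otimes> (f3 [^] k \<otimes> f5 [^] k)"
proof (induction k)
  case 0 then show ?case using cs by simp
next
  case (Suc k)
  have "f3 [^] Suc k \<otimes> f2 = f3 [^] k \<otimes> (f3 \<otimes> f2)" using cs by (simp add: m_assoc)
  also have "\<dots> = (f3 [^] k \<otimes> f2) \<otimes> (f3 \<otimes> f5)" using cs by (simp add: R32 m_assoc)
  also have "\<dots> = f2 \<otimes> (f3 [^] k \<otimes> (f5 [^] k \<otimes> f3) \<otimes> f5)" using cs Suc by (simp add: m_assoc)
  also have "\<dots> = f2 \<otimes> (f3 [^] Suc k \<otimes> f5 [^] Suc k)" using cs by (simp add: Z5k m_assoc)
  finally show ?case .
qed

lemma choose2_Suc: "Suc k choose 2 = k + (k choose 2)" by (simp add: numeral_2_eq_2)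
lemma choose3_Suc: "Suc k choose 3 = (k choose 2) + (k choose 3)"
  by (simp add: numeral_3_eq_3 numeral_2_eq_2)

lemma L21k: "f2 [^] (k::nat) \<otimes> f1 = f1 \<otimes> (f2 [^] k \<otimes> (f3 [^] k \<otimes> f5 [^] (k choose 2)))"
proof (induction k)
  case 0 then show ?case using cs by (simp add: numeral_2_eq_2)
next
  case (Suc k)
  have "f2 [^] Suc k \<otimes> f1 = f2 [^] k \<otimes> (f2 \<otimes> f1)" using cs by (simp add: m_assoc)
  also have "\<dots> = (f2 [^] k \<otimes> f1) \<otimes> (f2 \<otimes> f3)" using cs by (simp add: R21 m_assoc)
  also have "\<dots> = f1 \<otimes> (f2 [^] k \<otimes> (f3 [^] k \<otimes> (f5 [^] (k choose 2) \<otimes> f2)) \<otimes> f3)" using cs Suc by (simp add: m_assoc)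
  also have "\<dots> = f1 \<otimes> (f2 [^] k \<otimes> ((f3 [^] k \<otimes> f2) \<otimes> f5 [^] (k choose 2)) \<otimes> f3)" using cs by (simp add: Z5k m_assoc)
  also have "\<dots> = f1 \<otimes> (f2 [^] Suc k \<otimes> (f3 [^] k \<otimes> ((f5 [^] k \<otimes> f5 [^] (k choose 2)) \<otimes> f3)))" using cs by (simp add: L32k m_assoc)
  also have "\<dots> = f1 \<otimes> (f2 [^] Suc k \<otimes> (f3 [^] Suc k \<otimes> f5 [^] (Suc k choose 2)))"
    using cs by (simp add: Z5k m_assoc f5_merge choose2_Suc)
  finally show ?case .
qed

definition w :: "nat \<Rightarrow> nat \<Rightarrow> nat \<Rightarrow> nat \<Rightarrow> nat \<Rightarrow> 'a" where
  "w a1 a2 a3 a4 a5 = f1 [^] a1 \<otimes> (f2 [^] a2 \<otimes> (f3 [^] a3 \<otimes> (f4 [^] a4 \<otimes> f5 [^] a5)))"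

lemma w_closed[simp]: "w a1 a2 a3 a4 a5 \<in> carrier G"
  using cs by (simp add: w_def)

lemma S1: "w a1 a2 a3 a4 a5 \<otimes> f1 = w (Suc a1) a2 (a3 + a2) (a4 + a3) (a5 + a4 + (a2 choose 2))"
proof -
  have "w a1 a2 a3 a4 a5 \<otimes> f1 = f1 [^] a1 \<otimes> (f2 [^] a2 \<otimes> (f3 [^] a3 \<otimes> (f4 [^] a4 \<otimes> (f5 [^] a5 \<otimes> f1))))"
    using cs by (simp add: w_def m_assoc)
  also have "\<dots> = f1 [^] a1 \<otimes> (f2 [^] a2 \<otimes> (f3 [^] a3 \<otimes> ((f4 [^] a4 \<otimes> f1) \<otimes> f5 [^] a5)))"
    using cs by (simp add: Z5k[OF c1] m_assoc)
  also have "\<dots> = f1 [^] a1 \<otimes> (f2 [^] a2 \<otimes> ((f3 [^] a3 \<otimes> f1) \<otimes> (f4 [^] a4 \<otimes> (f5 [^] a4 \<otimes> f5 [^] a5))))"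
    using cs by (simp add: L41k m_assoc)
  also have "\<dots> = f1 [^] a1 \<otimes> ((f2 [^] a2 \<otimes> f1) \<otimes> (f3 [^] a3 \<otimes> (f4 [^] a3 \<otimes> (f4 [^] a4 \<otimes> (f5 [^] a4 \<otimes> f5 [^] a5)))))"
    using cs by (simp add: L31k m_assoc)
  also have "\<dots> = (f1 [^] a1 \<otimes> f1) \<otimes> (f2 [^] a2 \<otimes> (f3 [^] a2 \<otimes> (f5 [^] (a2 choose 2) \<otimes> (f3 [^] a3 \<otimes> (f4 [^] a3 \<otimes> (f4 [^] a4 \<otimes> (f5 [^] a4 \<otimes> f5 [^] a5)))))))"
    using cs by (simp add: L21k m_assoc)
  also have "\<dots> = f1 [^] Suc a1 \<otimes> (f2 [^] a2 \<otimes> (f3 [^] a2 \<otimes> (f3 [^] a3 \<otimes> (f4 [^] a3 \<otimes> (f4 [^] a4 \<otimes> (f5 [^] (a2 choose 2) \<otimes> (f5 [^] a4 \<otimes> f5 [^] a5)))))))"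
    using cs by (simp add: m_assoc Z5k_r[of "f3 [^] a3"] Z5k_r[of "f4 [^] a3"] Z5k_r[of "f4 [^] a4"])
  also have "\<dots> = w (Suc a1) a2 (a3 + a2) (a4 + a3) (a5 + a4 + (a2 choose 2))"
    using cs by (simp add: w_def nat_pow_mult m_assoc[symmetric] add.commute add.left_commute)
  finally show ?thesis .
qed

lemma S2: "w a1 a2 a3 a4 a5 \<otimes> f2 = w a1 (Suc a2) a3 a4 (a5 + a3)"
proof -
  have "w a1 a2 a3 a4 a5 \<otimes> f2 = f1 [^] a1 \<otimes> (f2 [^] a2 \<otimes> (f3 [^] a3 \<otimes> (f4 [^] a4 \<otimes> (f5 [^] a5 \<otimes> f2))))"
    using cs by (simp add: w_def m_assoc)
  also have "\<dots> = f1 [^] a1 \<otimes> (f2 [^] a2 \<otimes> (f3 [^] a3 \<otimes> ((f4 [^] a4 \<otimes> f2) \<otimes> f5 [^] a5)))"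
    using cs by (simp add: Z5k[OF c2] m_assoc)
  also have "\<dots> = f1 [^] a1 \<otimes> (f2 [^] a2 \<otimes> ((f3 [^] a3 \<otimes> f2) \<otimes> (f4 [^] a4 \<otimes> f5 [^] a5)))"
    using cs by (simp add: f4f2k m_assoc)
  also have "\<dots> = f1 [^] a1 \<otimes> ((f2 [^] a2 \<otimes> f2) \<otimes> (f3 [^] a3 \<otimes> (f5 [^] a3 \<otimes> (f4 [^] a4 \<otimes> f5 [^] a5))))"
    using cs by (simp add: L32k m_assoc)
  also have "\<dots> = f1 [^] a1 \<otimes> (f2 [^] Suc a2 \<otimes> (f3 [^] a3 \<otimes> (f4 [^] a4 \<otimes> (f5 [^] a3 \<otimes> f5 [^] a5))))"
    using cs by (simp add: Z5k_r[of "f4 [^] a4"] m_assoc)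
  also have "\<dots> = w a1 (Suc a2) a3 a4 (a5 + a3)"
    using cs by (simp add: w_def nat_pow_mult add.commute)
  finally show ?thesis .
qed

lemma S3: "w a1 a2 a3 a4 a5 \<otimes> f3 = w a1 a2 (Suc a3) a4 a5"
proof -
  have "w a1 a2 a3 a4 a5 \<otimes> f3 = f1 [^] a1 \<otimes> (f2 [^] a2 \<otimes> (f3 [^] a3 \<otimes> (f4 [^] a4 \<otimes> (f5 [^] a5 \<otimes> f3))))"
    using cs by (simp add: w_def m_assoc)
  also have "\<dots> = f1 [^] a1 \<otimes> (f2 [^] a2 \<otimes> (f3 [^] a3 \<otimes> ((f4 [^] a4 \<otimes> f3) \<otimes> f5 [^] a5)))"
    using cs by (simp add: Z5k[OF c3] m_assoc)
  also have "\<dots> = f1 [^] a1 \<otimes> (f2 [^] a2 \<otimes> ((f3 [^] a3 \<otimes> f3) \<otimes> (f4 [^] a4 \<otimes> f5 [^] a5)))"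
    using cs by (simp add: f4f3k m_assoc)
  also have "\<dots> = w a1 a2 (Suc a3) a4 a5"
    using cs by (simp add: w_def)
  finally show ?thesis .
qed

lemma S4: "w a1 a2 a3 a4 a5 \<otimes> f4 = w a1 a2 a3 (Suc a4) a5"
proof -
  have "w a1 a2 a3 a4 a5 \<otimes> f4 = f1 [^] a1 \<otimes> (f2 [^] a2 \<otimes> (f3 [^] a3 \<otimes> (f4 [^] a4 \<otimes> (f5 [^] a5 \<otimes> f4))))"
    using cs by (simp add: w_def m_assoc)
  also have "\<dots> = f1 [^] a1 \<otimes> (f2 [^] a2 \<otimes> (f3 [^] a3 \<otimes> ((f4 [^] a4 \<otimes> f4) \<otimes> f5 [^] a5)))"
    using cs by (simp add: Z5k[OF c4] m_assoc)
  also have "\<dots> = w a1 a2 a3 (Suc a4) a5"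
    using cs by (simp add: w_def)
  finally show ?thesis .
qed

lemma S5: "w a1 a2 a3 a4 a5 \<otimes> f5 = w a1 a2 a3 a4 (Suc a5)"
  using cs by (simp add: w_def m_assoc)

lemma P1k: "w a1 a2 a3 a4 a5 \<otimes> f1 [^] (k::nat) = w (a1 + k) a2 (a3 + k*a2) (a4 + k*a3 + (k choose 2)*a2)
   (a5 + k*a4 + (k choose 2)*a3 + (k choose 3)*a2 + k*(a2 choose 2))"
proof (induction k)
  case 0 then show ?case by (simp add: numeral_2_eq_2 numeral_3_eq_3)
next
  case (Suc k)
  have "w a1 a2 a3 a4 a5 \<otimes> f1 [^] Suc k = (w a1 a2 a3 a4 a5 \<otimes> f1 [^] k) \<otimes> f1"
    using cs by (simp add: m_assoc)
  also have "\<dots> = w (a1 + Suc k) a2 (a3 + Suc k*a2) (a4 + Suc k*a3 + (Suc k choose 2)*a2)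
   (a5 + Suc k*a4 + (Suc k choose 2)*a3 + (Suc k choose 3)*a2 + Suc k*(a2 choose 2))"
    unfolding Suc S1 by (simp add: choose2_Suc choose3_Suc algebra_simps)
  finally show ?case .
qed

lemma P2k: "w a1 a2 a3 a4 a5 \<otimes> f2 [^] (k::nat) = w a1 (a2 + k) a3 a4 (a5 + k*a3)"
proof (induction k)
  case 0 then show ?case by simp
next
  case (Suc k)
  have "w a1 a2 a3 a4 a5 \<otimes> f2 [^] Suc k = (w a1 a2 a3 a4 a5 \<otimes> f2 [^] k) \<otimes> f2"
    using cs by (simp add: m_assoc)
  also have "\<dots> = w a1 (a2 + Suc k) a3 a4 (a5 + Suc k*a3)"
    unfolding Suc S2 by (simp add: algebra_simps)
  finally show ?case .
qed

lemma P3k: "w a1 a2 a3 a4 a5 \<otimes> f3 [^] (k::nat) = w a1 a2 (a3 + k) a4 a5"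
proof (induction k)
  case 0 then show ?case by simp
next
  case (Suc k)
  have "w a1 a2 a3 a4 a5 \<otimes> f3 [^] Suc k = (w a1 a2 a3 a4 a5 \<otimes> f3 [^] k) \<otimes> f3"
    using cs by (simp add: m_assoc)
  also have "\<dots> = w a1 a2 (a3 + Suc k) a4 a5"
    unfolding Suc S3 by (simp add: algebra_simps)
  finally show ?case .
qed

lemma P4k: "w a1 a2 a3 a4 a5 \<otimes> f4 [^] (k::nat) = w a1 a2 a3 (a4 + k) a5"
proof (induction k)
  case 0 then show ?case by simp
next
  case (Suc k)
  have "w a1 a2 a3 a4 a5 \<otimes> f4 [^] Suc k = (w a1 a2 a3 a4 a5 \<otimes> f4 [^] k) \<otimes> f4"
    using cs by (simp add: m_assoc)
  also have "\<dots> = w a1 a2 a3 (a4 + Suc k) a5"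
    unfolding Suc S4 by (simp add: algebra_simps)
  finally show ?case .
qed

lemma P5k: "w a1 a2 a3 a4 a5 \<otimes> f5 [^] (k::nat) = w a1 a2 a3 a4 (a5 + k)"
proof (induction k)
  case 0 then show ?case by simp
next
  case (Suc k)
  have "w a1 a2 a3 a4 a5 \<otimes> f5 [^] Suc k = (w a1 a2 a3 a4 a5 \<otimes> f5 [^] k) \<otimes> f5"
    using cs by (simp add: m_assoc)
  also have "\<dots> = w a1 a2 a3 a4 (a5 + Suc k)"
    unfolding Suc S5 by (simp add: algebra_simps)
  finally show ?case .
qed

lemma wmul: "w a1 a2 a3 a4 a5 \<otimes> w b1 b2 b3 b4 b5 = w (a1+b1) (a2+b2) (a3 + b1*a2 + b3)
   (a4 + b1*a3 + (b1 choose 2)*a2 + b4)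
   (a5 + b1*a4 + (b1 choose 2)*a3 + (b1 choose 3)*a2 + b1*(a2 choose 2) + b2*(a3 + b1*a2) + b5)"
proof -
  have "w a1 a2 a3 a4 a5 \<otimes> w b1 b2 b3 b4 b5 =
     ((((w a1 a2 a3 a4 a5 \<otimes> f1 [^] b1) \<otimes> f2 [^] b2) \<otimes> f3 [^] b3) \<otimes> f4 [^] b4) \<otimes> f5 [^] b5"
    using cs by (simp add: w_def m_assoc)
  then show ?thesis by (simp add: P1k P2k P3k P4k P5k)
qed

lemma pow_red: assumes "x \<in> carrier G" shows "x [^] (n::nat) = x [^] (n mod 3) \<otimes> (x [^] (3::nat)) [^] (n div 3)"
proof -
  have "x [^] n = x [^] (n mod 3 + 3 * (n div 3))" by simp
  also have "\<dots> = x [^] (n mod 3) \<otimes> x [^] (3 * (n div 3))"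
    using assms by (simp add: nat_pow_mult)
  also have "\<dots> = x [^] (n mod 3) \<otimes> (x [^] (3::nat)) [^] (n div 3)"
    using assms by (simp add: nat_pow_pow)
  finally show ?thesis .
qed

lemma f4_mod: "f4 [^] (n::nat) = f4 [^] (n mod 3)" using pow_red[OF c4, of n] c4 by (simp add: P4)
lemma f5_mod: "f5 [^] (n::nat) = f5 [^] (n mod 3)" using pow_red[OF c5, of n] c5 by (simp add: P5)
lemma f1_red: "f1 [^] (n::nat) = f1 [^] (n mod 3) \<otimes> f5 [^] (e * (n div 3))"
  using pow_red[OF c1, of n] c5 by (simp add: P1 nat_pow_pow)
lemma f2_red: "f2 [^] (n::nat) = f2 [^] (n mod 3) \<otimes> f4 [^] (2 * (n div 3))"
  using pow_red[OF c2, of n] c4 by (simp add: P2 nat_pow_pow)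
lemma f3_red: "f3 [^] (n::nat) = f3 [^] (n mod 3) \<otimes> f5 [^] (2 * (n div 3))"
  using pow_red[OF c3, of n] c5 by (simp add: P3 nat_pow_pow)

lemma f43_r: "r \<in> carrier G \<Longrightarrow> f4 [^] (p::nat) \<otimes> (f3 [^] (q::nat) \<otimes> r) = f3 [^] q \<otimes> (f4 [^] p \<otimes> r)"
  using commute_pow2[OF c4 c3 R43, of p q] cs by (simp add: m_assoc[symmetric])

lemma wred: "w a1 a2 a3 a4 a5 = w (a1 mod 3) (a2 mod 3) (a3 mod 3) ((a4 + 2*(a2 div 3)) mod 3)
     ((a5 + e*(a1 div 3) + 2*(a3 div 3)) mod 3)"
proof -
  have "w a1 a2 a3 a4 a5 = (f1 [^] (a1 mod 3) \<otimes> f5 [^] (e * (a1 div 3))) \<otimes> ((f2 [^] (a2 mod 3) \<otimes> f4 [^] (2 * (a2 div 3)))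
     \<otimes> ((f3 [^] (a3 mod 3) \<otimes> f5 [^] (2 * (a3 div 3))) \<otimes> (f4 [^] a4 \<otimes> f5 [^] a5)))"
    unfolding w_def by (simp add: f1_red[of a1] f2_red[of a2] f3_red[of a3] del: nat_pow_closed)
  also have "\<dots> = f1 [^] (a1 mod 3) \<otimes> (f2 [^] (a2 mod 3) \<otimes> (f3 [^] (a3 mod 3) \<otimes> ((f4 [^] (2 * (a2 div 3)) \<otimes> f4 [^] a4) \<otimes> (f5 [^] (e * (a1 div 3)) \<otimes> (f5 [^] (2 * (a3 div 3)) \<otimes> f5 [^] a5)))))"
    using cs by (simp add: m_assoc Z5k_r[of "f2 [^] (a2 mod 3)"] Z5k_r[of "f4 [^] (2 * (a2 div 3))"] Z5k_r[of "f3 [^] (a3 mod 3)"]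
        Z5k_r[of "f4 [^] a4"] f43_r)
  also have "\<dots> = w (a1 mod 3) (a2 mod 3) (a3 mod 3) ((a4 + 2*(a2 div 3)) mod 3)
     ((a5 + e*(a1 div 3) + 2*(a3 div 3)) mod 3)"
    using cs unfolding w_def by (simp add: nat_pow_mult algebra_simps) (metis f4_mod f5_mod)
  finally show ?thesis .
qed

end

type_synonym c5 = "nat \<times> nat \<times> nat \<times> nat \<times> nat"

fun Af :: "c5 \<Rightarrow> c5 \<Rightarrow> c5" where
  "Af (a1,a2,a3,a4,a5) (b1,b2,b3,b4,b5) = ((a1+b1), (a2+b2), (a3 + b1*a2 + b3),
   (a4 + b1*a3 + (b1 choose 2)*a2 + b4),
   (a5 + b1*a4 + (b1 choose 2)*a3 + (b1 choose 3)*a2 + b1*(a2 choose 2) + b2*(a3 + b1*a2) + b5))"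

fun Nf :: "nat \<Rightarrow> c5 \<Rightarrow> c5" where
  "Nf e (a1,a2,a3,a4,a5) = (a1 mod 3, a2 mod 3, a3 mod 3, (a4 + 2*(a2 div 3)) mod 3,
     (a5 + e*(a1 div 3) + 2*(a3 div 3)) mod 3)"

definition mu :: "nat \<Rightarrow> c5 \<Rightarrow> c5 \<Rightarrow> c5" where "mu e a b = Nf e (Af a b)"

fun Tf :: "c5 \<Rightarrow> c5 \<Rightarrow> nat" where
  "Tf (a1,a2,a3,a4,a5) (b1,b2,b3,b4,b5) = b1*(a2 choose 2) + b2*a3 + a2*b1*b2"

definition V :: "c5 set" where "V = {0..<3} \<times> {0..<3} \<times> {0..<3} \<times> {0..<3} \<times> {0..<3}"

lemma finV: "finite V" by (simp add: V_def)
lemma cardV: "card V = 243" by (simp add: V_def card_cartesian_product)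

lemma mu_V: "mu e a b \<in> V"
  by (cases a; cases b) (simp add: mu_def V_def)

context G5 begin

definition W :: "c5 \<Rightarrow> 'a" where "W a = (case a of (a1,a2,a3,a4,a5) \<Rightarrow> w a1 a2 a3 a4 a5)"

lemma W_closed[simp]: "W a \<in> carrier G"
  by (cases a) (simp add: W_def)

lemma Wmul: "W a \<otimes> W b = W (mu e a b)"
  by (cases a; cases b) (simp add: W_def mu_def wmul wred[of "_ + _"])

lemma W0: "W (0,0,0,0,0) = \<one>" by (simp add: W_def w_def)
lemma W1: "W (1,0,0,0,0) = f1" using cs by (simp add: W_def w_def)
lemma W2: "W (0,1,0,0,0) = f2" using cs by (simp add: W_def w_def)
lemma W3: "W (0,0,1,0,0) = f3" using cs by (simp add: W_def w_def)
lemma W4: "W (0,0,0,1,0) = f4" using cs by (simp add: W_def w_def)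
lemma W5: "W (0,0,0,0,1) = f5" using cs by (simp add: W_def w_def)

lemma WV_mul: "x \<in> W ` V \<Longrightarrow> y \<in> W ` V \<Longrightarrow> x \<otimes> y \<in> W ` V"
  using Wmul mu_V by auto

lemma WV_pow: "x \<in> W ` V \<Longrightarrow> x [^] (n::nat) \<in> W ` V"
proof (induction n)
  case 0
  have "(0,0,0,0,0) \<in> V" by (simp add: V_def)
  then show ?case using W0 by (metis image_eqI nat_pow_0)
next
  case (Suc n) then show ?case using WV_mul by simp
qed

end

locale G5f = G5 +
  assumes fin: "finite (carrier G)" and card243: "card (carrier G) = 243"
    and gen: "generate G {f1, f2, f3, f4, f5} = carrier G"
begin

lemma WV_sub: "subgroup (W ` V) G"
proof (rule subgroupI)
  show "W ` V \<subseteq> carrier G" by auto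
  show "W ` V \<noteq> {}" using finV cardV by auto
  fix x y assume x: "x \<in> W ` V" and y: "y \<in> W ` V"
  show "x \<otimes> y \<in> W ` V" using WV_mul x y .
  have xc: "x \<in> carrier G" using x by auto
  have o: "ord x \<ge> 1" using ord_ge_1[OF fin xc] .
  have "x [^] (ord x - 1) \<otimes> x = x [^] ord x"
    using o xc by (metis Suc_diff_1 less_le_trans nat_pow_Suc zero_less_one)
  then have "x [^] (ord x - 1) \<otimes> x = \<one>" using xc by simp
  then have "inv x = x [^] (ord x - 1)" using xc by (metis inv_equality nat_pow_closed)
  then show "inv x \<in> W ` V" using WV_pow x by simp
qed

lemma WV_all: "W ` V = carrier G"
proof
  show "W ` V \<subseteq> carrier G" by auto
  have "{f1, f2, f3, f4, f5} \<subseteq> W ` V"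
  proof -
    have "(1,0,0,0,0) \<in> V" "(0,1,0,0,0) \<in> V" "(0,0,1,0,0) \<in> V" "(0,0,0,1,0) \<in> V" "(0,0,0,0,1) \<in> V"
      by (simp_all add: V_def)
    then show ?thesis using W1 W2 W3 W4 W5 by (metis empty_subsetI image_eqI insert_subset)
  qed
  then show "carrier G \<subseteq> W ` V" using generate_subgroup_incl[OF _ WV_sub] gen by blast
qed

lemma W_inj: "inj_on W V"
  by (rule eq_card_imp_inj_on[OF finV]) (simp add: WV_all card243 cardV)

definition coord :: "'a \<Rightarrow> c5" where "coord g = the_inv_into V W g"

lemma coord_V: "g \<in> carrier G \<Longrightarrow> coord g \<in> V"
  unfolding coord_def using W_inj WV_all by (metis the_inv_into_into subset_refl)

lemma W_coord: "g \<in> carrier G \<Longrightarrow> W (coord g) = g"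
  unfolding coord_def using W_inj WV_all by (metis f_the_inv_into_f)

lemma coord_W: "a \<in> V \<Longrightarrow> coord (W a) = a"
  unfolding coord_def using W_inj by (simp add: the_inv_into_f_f)

lemma coord_mul: "g \<in> carrier G \<Longrightarrow> h \<in> carrier G \<Longrightarrow> coord (g \<otimes> h) = mu e (coord g) (coord h)"
  by (metis Wmul W_coord coord_W mu_V)

end

lemma nat3: "(a::nat) < 3 \<longleftrightarrow> a = 0 \<or> a = 1 \<or> a = 2" by auto

lemma mod_cancel: "(x + s) mod (n::nat) = (y + s) mod n \<Longrightarrow> x mod n = y mod n"
  by (simp add: nat_mod_eq_iff)

lemma ch2_Suc: "Suc k choose 2 = k + (k choose 2)" by (simp add: numeral_2_eq_2)

lemma choose2_add: "(m + n) choose 2 = (m choose 2) + (n choose 2) + m*n"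
  by (induction n) (simp_all add: ch2_Suc algebra_simps)

lemma ch2_small: "x < 3 \<Longrightarrow> x choose 2 = (if x = 2 then 1 else 0)"
  by (auto simp: nat3 numeral_2_eq_2)

lemma ch3_small: "x < 3 \<Longrightarrow> x choose 3 = 0"
  by (simp add: binomial_eq_0)

lemma choose2_mod3: "((x::nat) choose 2) mod 3 = (if x mod 3 = 2 then 1 else 0)"
proof (induction x rule: less_induct)
  case (less x)
  show ?case
  proof (cases "x < 3")
    case True then show ?thesis by (simp add: ch2_small)
  next
    case False
    then obtain y where y: "x = y + 3" by (metis add.commute le_add_diff_inverse not_less)
    have "x choose 2 = (y choose 2) + 3 * (y + 1)" unfolding y choose2_add
      by (simp add: numeral_3_eq_3 numeral_2_eq_2)
    then have "(x choose 2) mod 3 = ((y choose 2) + 3 * (y + 1)) mod 3" by (simp only:)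
    also have "\<dots> = (y choose 2) mod 3" by (rule mod_mult_self2)
    also have "\<dots> = (if y mod 3 = 2 then 1 else 0)" using less y by simp
    finally show ?thesis using y by simp
  qed
qed

lemma Tf_exact: "Tf a b + Tf (Af a b) c = Tf b c + Tf a (Af b c)"
  by (cases a; cases b; cases c) (simp add: choose2_add algebra_simps)

lemma ch2_modmod: "((x mod 3) choose 2) mod 3 = (x choose 2) mod 3"
  by (simp add: choose2_mod3)

lemma Tf_red1: "Tf (Nf e x) c mod 3 = Tf x c mod 3"
proof (cases x; cases c)
  fix x1 x2 x3 x4 x5 c1 c2 c3 c4 c5
  assume xs: "x = (x1,x2,x3,x4,x5)" and cs: "c = (c1,c2,c3,c4,c5)"
  have "Tf (Nf e x) c mod 3 = (c1 * (x2 mod 3 choose 2) + c2 * (x3 mod 3) + (x2 mod 3) * c1 * c2) mod 3"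
    using xs cs by simp
  also have "\<dots> = (c1 * (x2 choose 2) + c2 * x3 + x2 * c1 * c2) mod 3"
    by (intro mod_add_cong mod_mult_cong; simp add: ch2_modmod)
  also have "\<dots> = Tf x c mod 3" using xs cs by simp
  finally show ?thesis .
qed

lemma Tf_red2: "Tf a (Nf e y) mod 3 = Tf a y mod 3"
proof (cases a; cases y)
  fix x1 x2 x3 x4 x5 c1 c2 c3 c4 c5
  assume xs: "a = (x1,x2,x3,x4,x5)" and cs: "y = (c1,c2,c3,c4,c5)"
  have "Tf a (Nf e y) mod 3 = ((c1 mod 3) * (x2 choose 2) + (c2 mod 3) * x3 + x2 * (c1 mod 3) * (c2 mod 3)) mod 3"
    using xs cs by simp
  also have "\<dots> = (c1 * (x2 choose 2) + c2 * x3 + x2 * c1 * c2) mod 3"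
    by (intro mod_add_cong mod_mult_cong; simp)
  also have "\<dots> = Tf a y mod 3" using xs cs by simp
  finally show ?thesis .
qed

lemma Tf_cocycle: "(Tf b c + Tf a (mu e b c)) mod 3 = (Tf a b + Tf (mu e a b) c) mod 3"
proof -
  have "(Tf b c + Tf a (mu e b c)) mod 3 = (Tf b c + Tf a (Af b c)) mod 3"
    unfolding mu_def using Tf_red2[of a e "Af b c"] by (metis mod_add_right_eq)
  also have "\<dots> = (Tf a b + Tf (Af a b) c) mod 3" by (simp add: Tf_exact)
  also have "\<dots> = (Tf a b + Tf (mu e a b) c) mod 3"
    unfolding mu_def using Tf_red1[of e "Af a b" c] by (metis mod_add_right_eq)
  finally show ?thesis .
qed

lemma K6: "(a1::nat)<3 \<Longrightarrow> (a2::nat)<3 \<Longrightarrow> (a3::nat)<3 \<Longrightarrow> (b1::nat)<3 \<Longrightarrow> (b2::nat)<3 \<Longrightarrow> (b3::nat)<3 \<Longrightarrow>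
 a1 \<noteq> 0 \<or> b1 \<noteq> 0 \<Longrightarrow>
 (b1*a2) mod 3 = (a1*b2) mod 3 \<Longrightarrow>
 (b1*a3 + (if b1 = 2 then 1 else 0)*a2) mod 3 = (a1*b3 + (if a1 = 2 then 1 else 0)*b2) mod 3 \<Longrightarrow>
 (b1*(if a2 = 2 then 1 else 0) + b2*a3 + a2*b1*b2) mod 3 = (a1*(if b2 = 2 then 1 else 0) + a2*b3 + b2*a1*a2) mod 3"
  unfolding nat3 by (elim disjE; simp)

lemma Tf_comm: assumes "a \<in> V" "b \<in> V" "mu e a b = mu e b a"
  shows "Tf a b mod 3 = Tf b a mod 3"
proof (cases a; cases b)
  fix a1 a2 a3 a4 a5 b1 b2 b3 b4 b5
  assume as: "a = (a1,a2,a3,a4,a5)" and bs: "b = (b1,b2,b3,b4,b5)"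
  have lt: "a1 < 3" "a2 < 3" "a3 < 3" "a4 < 3" "a5 < 3" "b1 < 3" "b2 < 3" "b3 < 3" "b4 < 3" "b5 < 3"
    using assms(1,2) as bs by (auto simp: V_def)
  have e3: "(a3 + b1*a2 + b3) mod 3 = (b3 + a1*b2 + a3) mod 3"
   and e4: "(a4 + b1*a3 + (b1 choose 2)*a2 + b4 + 2*((a2+b2) div 3)) mod 3 = (b4 + a1*b3 + (a1 choose 2)*b2 + a4 + 2*((a2+b2) div 3)) mod 3"
   and e5: "(a5 + b1*a4 + (b1 choose 2)*a3 + (b1 choose 3)*a2 + b1*(a2 choose 2) + b2*(a3 + b1*a2) + b5 + e*((a1+b1) div 3) + 2*((a3 + b1*a2 + b3) div 3)) mod 3
      = (b5 + a1*b4 + (a1 choose 2)*b3 + (a1 choose 3)*b2 + a1*(b2 choose 2) + a2*(b3 + a1*b2) + a5 + e*((a1+b1) div 3) + 2*((b3 + a1*b2 + a3) div 3)) mod 3"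
    using assms(3) as bs by (simp_all add: mu_def add.commute)
  have H3: "(b1*a2) mod 3 = (a1*b2) mod 3"
    using e3 mod_cancel[of "b1*a2" "a3+b3" 3 "a1*b2"] by (simp add: algebra_simps)
  have H4: "(b1*a3 + (if b1 = 2 then 1 else 0)*a2) mod 3 = (a1*b3 + (if a1 = 2 then 1 else 0)*b2) mod 3"
    using e4 mod_cancel[of "b1*a3 + (b1 choose 2)*a2" "a4 + b4 + 2*((a2+b2) div 3)" 3 "a1*b3 + (a1 choose 2)*b2"]
    lt by (simp add: algebra_simps ch2_small)
  show ?thesis
  proof (cases "a1 \<noteq> 0 \<or> b1 \<noteq> 0")
    case True
    have "(b1*(if a2 = 2 then 1 else 0) + b2*a3 + a2*b1*b2) mod 3 = (a1*(if b2 = 2 then 1 else 0) + a2*b3 + b2*a1*a2) mod 3"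
      using K6[OF lt(1,2,3,6,7,8) True H3 H4] .
    then show ?thesis using as bs lt by (simp add: ch2_small)
  next
    case False
    then have z: "a1 = 0" "b1 = 0" by auto
    have "(b2*a3 + (a5 + b5 + 2*((a3 + b3) div 3))) mod 3 = (a2*b3 + (a5 + b5 + 2*((a3 + b3) div 3))) mod 3"
      using e5 z by (simp add: algebra_simps ch2_small ch3_small)
    then have "(b2*a3) mod 3 = (a2*b3) mod 3" by (rule mod_cancel)
    then show ?thesis using as bs z by simp
  qed
qed


lemma mod3_Ints: "(x::nat) mod 3 = y mod 3 \<Longrightarrow> (of_nat x - of_nat y) / 3 \<in> (\<int> :: rat set)"
proof -
  assume "x mod 3 = y mod 3"
  then obtain q1 q2 where q: "x + 3 * q1 = y + 3 * q2" by (auto simp: nat_mod_eq_iff)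
  then have "(of_nat (x + 3 * q1) :: rat) = of_nat (y + 3 * q2)" by simp
  then have "(of_nat x + 3 * of_nat q1 :: rat) = of_nat y + 3 * of_nat q2" by simp
  then have "(of_nat x - of_nat y :: rat) = 3 * (of_nat q2 - of_nat q1)" by (simp add: algebra_simps)
  then have "(of_nat x - of_nat y) / 3 = (of_int (int q2 - int q1) :: rat)" by simp
  then show ?thesis by (metis Ints_of_int)
qed

lemma third_not_int: "(1/3 :: rat) \<notin> \<int>"
proof
  assume "(1/3 :: rat) \<in> \<int>"
  then obtain n :: int where n: "(1/3 :: rat) = of_int n" by (auto elim: Ints_cases)
  then have "(1::rat) = of_int (3 * n)" by simp
  then have "(1::int) = 3 * n" by (metis of_int_eq_1_iff)
  then show False by presburger
qed

lemma Tf_zero_left: "Tf (0,0,0,0,0) b = 0" by (cases b) simp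
lemma Tf_zero_right: "Tf a (0,0,0,0,0) = 0" by (cases a) simp

context G5f begin

definition cc :: "'a \<Rightarrow> 'a \<Rightarrow> rat" where
  "cc g h = of_nat (Tf (coord g) (coord h)) / 3"

lemma cocycle: "cocycle2 G cc"
  unfolding cocycle2_def
proof (intro ballI)
  fix g h k assume g: "g \<in> carrier G" and h: "h \<in> carrier G" and k: "k \<in> carrier G"
  let ?a = "coord g" and ?b = "coord h" and ?c = "coord k"
  have m1: "coord (g \<otimes> h) = mu e ?a ?b" using coord_mul g h .
  have m2: "coord (h \<otimes> k) = mu e ?b ?c" using coord_mul h k .
  have ints: "(of_nat (Tf ?b ?c + Tf ?a (mu e ?b ?c)) - of_nat (Tf ?a ?b + Tf (mu e ?a ?b) ?c)) / 3 \<in> (\<int>::rat set)"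
    using mod3_Ints[OF Tf_cocycle] .
  have eq: "cc h k - cc (g \<otimes> h) k + cc g (h \<otimes> k) - cc g h =
     (of_nat (Tf ?b ?c + Tf ?a (mu e ?b ?c)) - of_nat (Tf ?a ?b + Tf (mu e ?a ?b) ?c)) / 3"
    unfolding cc_def m1 m2 by (simp add: field_simps)
  show "cc h k - cc (g \<otimes> h) k + cc g (h \<otimes> k) - cc g h \<in> \<int>" unfolding eq by (rule ints)
qed

lemma coordW: "coord (W (a1,a2,a3,a4,a5)) = (a1,a2,a3,a4,a5)" if "a1<3" "a2<3" "a3<3" "a4<3" "a5<3"
  using coord_W that by (simp add: V_def)

lemma not_cob: "\<not> coboundary_on G (carrier G) cc"
proof
  assume "coboundary_on G (carrier G) cc"
  then obtain F where F: "\<And>g h. g \<in> carrier G \<Longrightarrow> h \<in> carrier G \<Longrightarrow>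
      cc g h - (F h - F (g \<otimes> h) + F g) \<in> \<int>" unfolding coboundary_on_def by blast
  have k1: "coord f1 = (1,0,0,0,0)" using coordW[of 1 0 0 0 0] W1 by simp
  have k2: "coord f2 = (0,1,0,0,0)" using coordW[of 0 1 0 0 0] W2 by simp
  have k3: "coord f3 = (0,0,1,0,0)" using coordW[of 0 0 1 0 0] W3 by simp
  have k4: "coord f4 = (0,0,0,1,0)" using coordW[of 0 0 0 1 0] W4 by simp
  have k5: "coord f5 = (0,0,0,0,1)" using coordW[of 0 0 0 0 1] W5 by simp
  have W35: "W (0,0,1,0,1) = f3 \<otimes> f5" using cs by (simp add: W_def w_def)
  have W45: "W (0,0,0,1,1) = f4 \<otimes> f5" using cs by (simp add: W_def w_def)
  have k35: "coord (f3 \<otimes> f5) = (0,0,1,0,1)" using coordW[of 0 0 1 0 1] W35 by simp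
  have k45: "coord (f4 \<otimes> f5) = (0,0,0,1,1)" using coordW[of 0 0 0 1 1] W45 by simp
  have f35: "f3 \<otimes> f5 \<in> carrier G" and f45: "f4 \<otimes> f5 \<in> carrier G" using cs by auto
  have "cc f2 (f3 \<otimes> f5) - (F (f3 \<otimes> f5) - F (f2 \<otimes> (f3 \<otimes> f5)) + F f2)
       + (cc f3 f5 - (F f5 - F (f3 \<otimes> f5) + F f3))
       - (cc f3 f2 - (F f2 - F (f3 \<otimes> f2) + F f3)) \<in> \<int>"
    by (rule Ints_diff[OF Ints_add[OF F[OF c2 f35] F[OF c3 c5]] F[OF c3 c2]])
  moreover have "cc f2 (f3 \<otimes> f5) = 0" "cc f3 f5 = 0" "cc f3 f2 = 1/3"
    unfolding cc_def using k2 k3 k5 k35 by simp_all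
  ultimately have A: "- F f5 - 1/3 \<in> \<int>" using R32 by (simp add: algebra_simps)
  have "cc f1 (f4 \<otimes> f5) - (F (f4 \<otimes> f5) - F (f1 \<otimes> (f4 \<otimes> f5)) + F f1)
       + (cc f4 f5 - (F f5 - F (f4 \<otimes> f5) + F f4))
       - (cc f4 f1 - (F f1 - F (f4 \<otimes> f1) + F f4)) \<in> \<int>"
    by (rule Ints_diff[OF Ints_add[OF F[OF c1 f45] F[OF c4 c5]] F[OF c4 c1]])
  moreover have "cc f1 (f4 \<otimes> f5) = 0" "cc f4 f5 = 0" "cc f4 f1 = 0"
    unfolding cc_def using k1 k4 k5 k45 by simp_all
  ultimately have B: "- F f5 \<in> \<int>" using R41 by (simp add: algebra_simps)
  have "(- F f5) - (- F f5 - 1/3) \<in> \<int>" by (rule Ints_diff[OF B A])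
  then show False using third_not_int by simp
qed

end

lemma (in group) comm_r: "a \<in> carrier G \<Longrightarrow> b \<in> carrier G \<Longrightarrow> r \<in> carrier G \<Longrightarrow> a \<otimes> b = b \<otimes> a \<Longrightarrow>
   a \<otimes> (b \<otimes> r) = b \<otimes> (a \<otimes> r)"
  by (metis m_assoc)

lemma (in group) rep3_mult:
  assumes xc: "x \<in> carrier G" and yc: "y \<in> carrier G" and tc: "t \<in> carrier G"
    and xy: "x \<otimes> y = y \<otimes> x" and xt: "x \<otimes> t = t \<otimes> x" and yt: "y \<otimes> t = t \<otimes> y"
  shows "x [^] (i::nat) \<otimes> y [^] (j::nat) \<otimes> t [^] (k::nat) \<otimes> (x [^] (p::nat) \<otimes> y [^] (q::nat) \<otimes> t [^] (r::nat))
       = x [^] (i+p) \<otimes> y [^] (j+q) \<otimes> t [^] (k+r)"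
proof -
  have c1: "y [^] j \<otimes> x [^] p = x [^] p \<otimes> y [^] j" using commute_pow2[OF yc xc] xy by simp
  have c2: "t [^] k \<otimes> x [^] p = x [^] p \<otimes> t [^] k" using commute_pow2[OF tc xc] xt by simp
  have c3: "t [^] k \<otimes> y [^] q = y [^] q \<otimes> t [^] k" using commute_pow2[OF tc yc] yt by simp
  have "x [^] i \<otimes> y [^] j \<otimes> t [^] k \<otimes> (x [^] p \<otimes> y [^] q \<otimes> t [^] r)
      = x [^] i \<otimes> (y [^] j \<otimes> (t [^] k \<otimes> (x [^] p \<otimes> (y [^] q \<otimes> t [^] r))))"
    using xc yc tc by (simp add: m_assoc)
  also have "\<dots> = x [^] i \<otimes> (y [^] j \<otimes> (x [^] p \<otimes> (t [^] k \<otimes> (y [^] q \<otimes> t [^] r))))"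
    using comm_r[of "t [^] k" "x [^] p" "y [^] q \<otimes> t [^] r"] c2 xc yc tc by simp
  also have "\<dots> = x [^] i \<otimes> (x [^] p \<otimes> (y [^] j \<otimes> (t [^] k \<otimes> (y [^] q \<otimes> t [^] r))))"
    using comm_r[of "y [^] j" "x [^] p" "t [^] k \<otimes> (y [^] q \<otimes> t [^] r)"] c1 xc yc tc by simp
  also have "\<dots> = x [^] i \<otimes> (x [^] p \<otimes> (y [^] j \<otimes> (y [^] q \<otimes> (t [^] k \<otimes> t [^] r))))"
    using comm_r[of "t [^] k" "y [^] q" "t [^] r"] c3 xc yc tc by simp
  also have "\<dots> = x [^] (i+p) \<otimes> y [^] (j+q) \<otimes> t [^] (k+r)"
    using xc yc tc by (simp add: m_assoc nat_pow_mult[symmetric])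
  finally show ?thesis .
qed

context G5f begin

definition Eg :: "('a \<times> nat) monoid" where
  "Eg = \<lparr>carrier = carrier G \<times> {0..<3},
        monoid.mult = (\<lambda>p q. (fst p \<otimes> fst q, (snd p + snd q + Tf (coord (fst p)) (coord (fst q))) mod 3)),
        one = (\<one>, 0)\<rparr>"

lemma Eg_carrier[simp]: "carrier Eg = carrier G \<times> {0..<3}" by (simp add: Eg_def)
lemma Eg_mult[simp]: "p \<otimes>\<^bsub>Eg\<^esub> q = (fst p \<otimes> fst q, (snd p + snd q + Tf (coord (fst p)) (coord (fst q))) mod 3)"
  by (simp add: Eg_def)
lemma Eg_one[simp]: "\<one>\<^bsub>Eg\<^esub> = (\<one>, 0)" by (simp add: Eg_def)

lemma coord_one: "coord \<one> = (0,0,0,0,0)"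
  using coordW[of 0 0 0 0 0] W0 by simp

lemma T1l[simp]: "Tf (coord \<one>) b = 0" by (simp add: coord_one Tf_zero_left)
lemma T1r[simp]: "Tf a (coord \<one>) = 0" by (simp add: coord_one Tf_zero_right)

lemma assoc_arith:
  assumes "(T3 + T4) mod 3 = (T1 + T2) mod 3"
  shows "((k + l + T1) mod 3 + n + T2) mod 3 = (k + (l + n + T3) mod 3 + T4) mod (3::nat)"
proof -
  have "((k + l + T1) mod 3 + n + T2) mod 3 = ((k + l + T1) + n + T2) mod 3"
    by (intro mod_add_cong) simp_all
  also have "\<dots> = ((k + l + n) + (T1 + T2)) mod 3" by (simp add: algebra_simps)
  also have "\<dots> = ((k + l + n) + (T3 + T4)) mod 3" by (rule mod_add_cong[OF refl assms[symmetric]])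
  also have "\<dots> = (k + (l + n + T3) + T4) mod 3" by (simp add: algebra_simps)
  also have "\<dots> = (k + (l + n + T3) mod 3 + T4) mod 3"
    by (intro mod_add_cong) simp_all
  finally show ?thesis .
qed

lemma inv_arith: "u < 3 \<Longrightarrow> ((3 - u) mod 3 + u) mod 3 = (0::nat)"
  by (auto simp: nat3)

lemma Eg_group: "group Eg"
proof (rule groupI)
  fix x y assume "x \<in> carrier Eg" "y \<in> carrier Eg"
  then show "x \<otimes>\<^bsub>Eg\<^esub> y \<in> carrier Eg" by auto
next
  show "\<one>\<^bsub>Eg\<^esub> \<in> carrier Eg" by simp
next
  fix x y z assume x: "x \<in> carrier Eg" and y: "y \<in> carrier Eg" and z: "z \<in> carrier Eg"
  obtain g k where gx: "x = (g,k)" "g \<in> carrier G" using x by auto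
  obtain h l where hy: "y = (h,l)" "h \<in> carrier G" using y by auto
  obtain m n where mz: "z = (m,n)" "m \<in> carrier G" using z by auto
  have "(Tf (coord h) (coord m) + Tf (coord g) (coord (h \<otimes> m))) mod 3 =
        (Tf (coord g) (coord h) + Tf (coord (g \<otimes> h)) (coord m)) mod 3"
    using Tf_cocycle coord_mul gx hy mz by simp
  then have ar: "((k + l + Tf (coord g) (coord h)) mod 3 + n + Tf (coord (g \<otimes> h)) (coord m)) mod 3
     = (k + (l + n + Tf (coord h) (coord m)) mod 3 + Tf (coord g) (coord (h \<otimes> m))) mod 3"
    by (rule assoc_arith)
  show "x \<otimes>\<^bsub>Eg\<^esub> y \<otimes>\<^bsub>Eg\<^esub> z = x \<otimes>\<^bsub>Eg\<^esub> (y \<otimes>\<^bsub>Eg\<^esub> z)"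
    unfolding Eg_mult using gx hy mz ar by (simp add: m_assoc)
next
  fix x assume x: "x \<in> carrier Eg"
  obtain g k where gx: "x = (g,k)" "g \<in> carrier G" "k < 3" using x by auto
  show "\<one>\<^bsub>Eg\<^esub> \<otimes>\<^bsub>Eg\<^esub> x = x" using gx by simp
  let ?u = "(k + Tf (coord (inv g)) (coord g)) mod 3"
  let ?y = "(inv g, (3 - ?u) mod 3)"
  have "?y \<otimes>\<^bsub>Eg\<^esub> x = \<one>\<^bsub>Eg\<^esub>"
    using gx inv_arith[of ?u] by (simp add: add.assoc mod_add_right_eq)
  moreover have "?y \<in> carrier Eg" using gx by simp
  ultimately show "\<exists>y\<in>carrier Eg. y \<otimes>\<^bsub>Eg\<^esub> x = \<one>\<^bsub>Eg\<^esub>" by blast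
qed

end

context G5f begin

lemma Eg_fin: "finite (carrier Eg)" using fin by simp

definition tt :: "'a \<times> nat" where "tt = (\<one>, 1)"

lemma tt_in: "tt \<in> carrier Eg" by (simp add: tt_def)

lemma tt_pow: "tt [^]\<^bsub>Eg\<^esub> (n::nat) = (\<one>, n mod 3)"
  by (induction n) (simp_all add: tt_def mod_simps)

lemma tt_comm: "p \<in> carrier Eg \<Longrightarrow> tt \<otimes>\<^bsub>Eg\<^esub> p = p \<otimes>\<^bsub>Eg\<^esub> tt"
  by (auto simp: tt_def add.commute)

lemma fst_pow: "p \<in> carrier Eg \<Longrightarrow> fst (p [^]\<^bsub>Eg\<^esub> (n::nat)) = fst p [^] n"
  by (induction n) auto

lemma lift_mul: "g \<in> carrier G \<Longrightarrow> h \<in> carrier G \<Longrightarrow>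
   (g, 0) \<otimes>\<^bsub>Eg\<^esub> (h, 0) = (g \<otimes> h, 0) \<otimes>\<^bsub>Eg\<^esub> tt [^]\<^bsub>Eg\<^esub> Tf (coord g) (coord h)"
  by (simp add: tt_pow)

lemma lift_comm: "g \<in> carrier G \<Longrightarrow> h \<in> carrier G \<Longrightarrow> g \<otimes> h = h \<otimes> g \<Longrightarrow>
   (g, 0) \<otimes>\<^bsub>Eg\<^esub> (h, 0) = (h, 0) \<otimes>\<^bsub>Eg\<^esub> (g, 0)"
  using Tf_comm[OF coord_V coord_V, of g h e] coord_mul[of g h] coord_mul[of h g] by simp

lemma bic:
  assumes a: "a \<in> carrier G" and b: "b \<in> carrier G" and ab: "a \<otimes> b = b \<otimes> a"
    and I: "generate G {a} \<inter> generate G {b} = {\<one>}"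
    and A: "A = generate G {a} <#> generate G {b}"
    and Asub: "subgroup A G"
  shows "coboundary_on G A cc"
proof -
  interpret E: group Eg by (rule Eg_group)
  define x where "x = (a, 0::nat)"
  define y where "y = (b, 0::nat)"
  have xc: "x \<in> carrier Eg" and yc: "y \<in> carrier Eg" using a b by (simp_all add: x_def y_def)
  have xy: "x \<otimes>\<^bsub>Eg\<^esub> y = y \<otimes>\<^bsub>Eg\<^esub> x" unfolding x_def y_def by (rule lift_comm[OF a b ab])
  have xt: "x \<otimes>\<^bsub>Eg\<^esub> tt = tt \<otimes>\<^bsub>Eg\<^esub> x" using tt_comm[OF xc] by simp
  have yt: "y \<otimes>\<^bsub>Eg\<^esub> tt = tt \<otimes>\<^bsub>Eg\<^esub> y" using tt_comm[OF yc] by simp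
  define rep where "rep i j k = x [^]\<^bsub>Eg\<^esub> (i::nat) \<otimes>\<^bsub>Eg\<^esub> y [^]\<^bsub>Eg\<^esub> (j::nat) \<otimes>\<^bsub>Eg\<^esub> tt [^]\<^bsub>Eg\<^esub> (k::nat)" for i j k
  have rep_mult: "rep i j k \<otimes>\<^bsub>Eg\<^esub> rep p q r = rep (i+p) (j+q) (k+r)" for i j k p q r
    unfolding rep_def by (rule E.rep3_mult[OF xc yc tt_in xy xt yt])
  have rep_in: "rep i j k \<in> carrier Eg" for i j k
    unfolding rep_def using xc yc tt_in by blast
  have fst_rep: "fst (rep i j k) = a [^] i \<otimes> b [^] j" for i j k
    unfolding rep_def using xc yc tt_in a b by (simp add: fst_pow tt_pow x_def y_def)
  have rep00: "rep 0 0 k = tt [^]\<^bsub>Eg\<^esub> k" for k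
    unfolding rep_def using tt_in by (simp add: tt_pow)
  define m where "m = ord a"
  define n where "n = ord b"
  have m1: "m \<ge> 1" unfolding m_def using ord_ge_1[OF fin a] .
  have n1: "n \<ge> 1" unfolding n_def using ord_ge_1[OF fin b] .
  define ra where "ra = snd (x [^]\<^bsub>Eg\<^esub> m)"
  define rb where "rb = snd (y [^]\<^bsub>Eg\<^esub> n)"
  have xm: "x [^]\<^bsub>Eg\<^esub> m = tt [^]\<^bsub>Eg\<^esub> ra"
  proof -
    have c: "x [^]\<^bsub>Eg\<^esub> m \<in> carrier Eg" using xc by blast
    have "fst (x [^]\<^bsub>Eg\<^esub> m) = \<one>" using fst_pow[OF xc] a by (simp add: x_def m_def)
    moreover have "ra < 3" using c unfolding ra_def by auto
    ultimately show ?thesis unfolding ra_def by (simp add: tt_pow prod_eq_iff)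
  qed
  have yn: "y [^]\<^bsub>Eg\<^esub> n = tt [^]\<^bsub>Eg\<^esub> rb"
  proof -
    have c: "y [^]\<^bsub>Eg\<^esub> n \<in> carrier Eg" using yc by blast
    have "fst (y [^]\<^bsub>Eg\<^esub> n) = \<one>" using fst_pow[OF yc] b by (simp add: y_def n_def)
    moreover have "rb < 3" using c unfolding rb_def by auto
    ultimately show ?thesis unfolding rb_def by (simp add: tt_pow prod_eq_iff)
  qed
  define \<alpha> :: rat where "\<alpha> = of_nat ra / (3 * of_nat m)"
  define \<beta> :: rat where "\<beta> = of_nat rb / (3 * of_nat n)"
  define val where "val i j k = of_nat i * \<alpha> + of_nat j * \<beta> + of_nat k / 3" for i j k :: nat
  have Z1: "val i j k \<in> \<int>" if r1: "rep i j k = \<one>\<^bsub>Eg\<^esub>" for i j k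
  proof -
    have ab1: "a [^] i \<otimes> b [^] j = \<one>" using fst_rep[of i j k] r1 by simp
    have aiinv: "a [^] i = inv (b [^] j)" using inv_equality[OF ab1] a b by simp
    have "a [^] i \<in> generate G {a}" using generate_pow_on_finite_carrier[OF fin a] by blast
    moreover have "inv (b [^] j) \<in> generate G {b}"
    proof -
      have "b [^] j \<in> generate G {b}" using generate_pow_on_finite_carrier[OF fin b] by blast
      then show ?thesis using subgroup.m_inv_closed[OF generate_is_subgroup] b by auto
    qed
    ultimately have "a [^] i \<in> generate G {a} \<inter> generate G {b}" using aiinv by simp
    then have ai: "a [^] i = \<one>" using I by auto
    then have bj: "b [^] j = \<one>" using ab1 a b by simp
    have "m dvd i" using ai pow_eq_id[OF a] by (simp add: m_def)
    then obtain i' where i': "i = m * i'" by blast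
    have "n dvd j" using bj pow_eq_id[OF b] by (simp add: n_def)
    then obtain j' where j': "j = n * j'" by blast
    have xi: "x [^]\<^bsub>Eg\<^esub> (m * i') = tt [^]\<^bsub>Eg\<^esub> (ra * i')"
      by (simp add: E.nat_pow_pow[OF xc, symmetric] xm E.nat_pow_pow[OF tt_in])
    have yj: "y [^]\<^bsub>Eg\<^esub> (n * j') = tt [^]\<^bsub>Eg\<^esub> (rb * j')"
      by (simp add: E.nat_pow_pow[OF yc, symmetric] yn E.nat_pow_pow[OF tt_in])
    have "rep i j k = tt [^]\<^bsub>Eg\<^esub> (ra * i' + rb * j' + k)"
      unfolding rep_def i' j' xi yj using tt_in
      by (simp del: Eg_mult add: E.nat_pow_mult)
    then have "(ra * i' + rb * j' + k) mod 3 = 0" using r1 by (simp add: tt_pow)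
    then obtain q where q: "ra * i' + rb * j' + k = 3 * q" by blast
    have "val i j k = (of_nat (ra * i' + rb * j' + k)) / 3"
      unfolding val_def \<alpha>_def \<beta>_def i' j' using m1 n1 by (simp add: field_simps)
    also have "\<dots> = of_nat q" using q by simp
    finally show ?thesis by simp
  qed
  define N where "N = E.ord x"
  define N' where "N' = E.ord y"
  have N1: "N \<ge> 1" unfolding N_def using E.ord_ge_1[OF Eg_fin xc] .
  have N'1: "N' \<ge> 1" unfolding N'_def using E.ord_ge_1[OF Eg_fin yc] .
  have xN: "x [^]\<^bsub>Eg\<^esub> N = \<one>\<^bsub>Eg\<^esub>" unfolding N_def using xc by simp
  have yN: "y [^]\<^bsub>Eg\<^esub> N' = \<one>\<^bsub>Eg\<^esub>" unfolding N'_def using yc by simp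
  have t3: "tt [^]\<^bsub>Eg\<^esub> (3::nat) = \<one>\<^bsub>Eg\<^esub>" by (simp add: tt_pow)
  have valN: "val N 0 0 \<in> \<int>" using Z1[of N 0 0] xN tt_in xc yc unfolding rep_def by simp
  have valN': "val 0 N' 0 \<in> \<int>" using Z1[of 0 N' 0] yN tt_in xc yc unfolding rep_def by simp
  have WD: "val i j k - val i' j' k' \<in> \<int>" if eq: "rep i j k = rep i' j' k'" for i j k i' j' k'
  proof -
    let ?R = "rep (i' * (N - 1)) (j' * (N' - 1)) (2 * k')"
    have "rep (i + i' * (N - 1)) (j + j' * (N' - 1)) (k + 2 * k') = rep i j k \<otimes>\<^bsub>Eg\<^esub> ?R"
      by (rule rep_mult[symmetric])
    also have "\<dots> = rep i' j' k' \<otimes>\<^bsub>Eg\<^esub> ?R" using eq by simp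
    also have "\<dots> = rep (i' * N) (j' * N') (3 * k')"
    proof -
      have "i' + i' * (N - 1) = i' * N" using N1 by (simp add: algebra_simps)
      moreover have "j' + j' * (N' - 1) = j' * N'" using N'1 by (simp add: algebra_simps)
      moreover have "k' + 2 * k' = 3 * k'" by simp
      ultimately show ?thesis by (simp del: Eg_mult add: rep_mult)
    qed
    also have "\<dots> = \<one>\<^bsub>Eg\<^esub>"
      unfolding rep_def using xc yc tt_in
      by (simp del: Eg_mult Eg_one add: mult.commute[of i'] mult.commute[of j'] E.nat_pow_pow[symmetric] xN yN t3 E.l_one[OF E.one_closed])
    finally have "val (i + i' * (N - 1)) (j + j' * (N' - 1)) (k + 2 * k') \<in> \<int>" by (rule Z1)
    then have "val (i + i' * (N - 1)) (j + j' * (N' - 1)) (k + 2 * k') - of_nat i' * val N 0 0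
        - of_nat j' * val 0 N' 0 - of_nat k' \<in> \<int>"
      using valN valN' by (intro Ints_diff Ints_mult) auto
    moreover have "val (i + i' * (N - 1)) (j + j' * (N' - 1)) (k + 2 * k') - of_nat i' * val N 0 0
        - of_nat j' * val 0 N' 0 - of_nat k' = val i j k - val i' j' k'"
    proof -
      have h1: "(of_nat (i' * (N - 1)) :: rat) = of_nat i' * of_nat N - of_nat i'"
        using N1 by (simp add: of_nat_diff algebra_simps)
      have h2: "(of_nat (j' * (N' - 1)) :: rat) = of_nat j' * of_nat N' - of_nat j'"
        using N'1 by (simp add: of_nat_diff algebra_simps)
      show ?thesis unfolding val_def of_nat_add h1 h2 by (simp add: algebra_simps add_divide_distrib)
    qed
    ultimately show ?thesis by metis
  qed
  define \<Psi> where "\<Psi> z = (SOME v. \<exists>i j k. z = rep i j k \<and> v = val i j k)" for z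
  have \<Psi>rep: "\<Psi> (rep i j k) - val i j k \<in> \<int>" for i j k
  proof -
    have "\<exists>v. \<exists>i0 j0 k0. rep i j k = rep i0 j0 k0 \<and> v = val i0 j0 k0" by blast
    then have "\<exists>i0 j0 k0. rep i j k = rep i0 j0 k0 \<and> \<Psi> (rep i j k) = val i0 j0 k0"
      unfolding \<Psi>_def by (rule someI_ex)
    then obtain i0 j0 k0 where "rep i j k = rep i0 j0 k0" "\<Psi> (rep i j k) = val i0 j0 k0" by blast
    then show ?thesis using WD[of i0 j0 k0 i j k] by simp
  qed
  have repA: "\<exists>i j k. (g, 0) = rep i j k" if g: "g \<in> A" for g
  proof -
    obtain p q where pq: "p \<in> generate G {a}" "q \<in> generate G {b}" "g = p \<otimes> q"
      using g unfolding A set_mult_def by blast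
    obtain i :: nat where i: "p = a [^] i" using pq(1) generate_pow_on_finite_carrier[OF fin a] by blast
    obtain j :: nat where j: "q = b [^] j" using pq(2) generate_pow_on_finite_carrier[OF fin b] by blast
    define s where "s = snd (rep i j 0)"
    have s3: "s < 3" using rep_in[of i j 0] unfolding s_def by auto
    have fr: "fst (rep i j 0) = g" using fst_rep pq i j by simp
    have gc: "g \<in> carrier G" using fr rep_in[of i j 0] by auto
    have "rep i j (0 + (3 - s)) = rep i j 0 \<otimes>\<^bsub>Eg\<^esub> rep 0 0 (3 - s)" by (simp del: Eg_mult add: rep_mult)
    also have "\<dots> = (g, 0)"
      using fr s3 gc inv_arith[OF s3] unfolding rep00 s_def
      by (simp add: tt_pow prod_eq_iff add.commute)
    finally show ?thesis by (metis add_0)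
  qed
  show ?thesis unfolding coboundary_on_def
  proof (intro exI ballI)
    fix g h assume g: "g \<in> A" and h: "h \<in> A"
    have gc: "g \<in> carrier G" and hc: "h \<in> carrier G" using g h subgroup.subset[OF Asub] by auto
    have gh: "g \<otimes> h \<in> A" using subgroup.m_closed[OF Asub g h] .
    obtain i j k where gi: "(g, 0) = rep i j k" using repA[OF g] by blast
    obtain p q r where hi: "(h, 0) = rep p q r" using repA[OF h] by blast
    obtain u v w where ghi: "(g \<otimes> h, 0) = rep u v w" using repA[OF gh] by blast
    define T where "T = Tf (coord g) (coord h)"
    have "rep (i+p) (j+q) (k+r) = rep u v (w + T)"
    proof -
      have "rep (i+p) (j+q) (k+r) = (g, 0) \<otimes>\<^bsub>Eg\<^esub> (h, 0)" using gi hi rep_mult by (simp del: Eg_mult)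
      also have "\<dots> = (g \<otimes> h, 0) \<otimes>\<^bsub>Eg\<^esub> tt [^]\<^bsub>Eg\<^esub> T" unfolding T_def by (rule lift_mul[OF gc hc])
      also have "\<dots> = rep u v w \<otimes>\<^bsub>Eg\<^esub> rep 0 0 T" using ghi rep00 by (simp del: Eg_mult)
      also have "\<dots> = rep u v (w + T)" by (simp del: Eg_mult add: rep_mult)
      finally show ?thesis .
    qed
    then have D4: "val (i+p) (j+q) (k+r) - val u v (w + T) \<in> \<int>" by (rule WD)
    have D1: "\<Psi> (g, 0) - val i j k \<in> \<int>" using \<Psi>rep gi by simp
    have D2: "\<Psi> (h, 0) - val p q r \<in> \<int>" using \<Psi>rep hi by simp
    have D3: "\<Psi> (g \<otimes> h, 0) - val u v w \<in> \<int>" using \<Psi>rep ghi by simp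
    have "(\<Psi> (g \<otimes> h, 0) - val u v w) - (\<Psi> (g, 0) - val i j k) - (\<Psi> (h, 0) - val p q r)
          - (val (i+p) (j+q) (k+r) - val u v (w + T)) \<in> \<int>"
      by (rule Ints_diff[OF Ints_diff[OF Ints_diff[OF D3 D1] D2] D4])
    moreover have "(\<Psi> (g \<otimes> h, 0) - val u v w) - (\<Psi> (g, 0) - val i j k) - (\<Psi> (h, 0) - val p q r)
          - (val (i+p) (j+q) (k+r) - val u v (w + T)) = cc g h - (\<Psi> (h, 0) - \<Psi> (g \<otimes> h, 0) + \<Psi> (g, 0))"
      unfolding val_def cc_def T_def by (simp add: algebra_simps add_divide_distrib)
    ultimately show "cc g h - ((\<lambda>g. \<Psi> (g, 0)) h - (\<lambda>g. \<Psi> (g, 0)) (g \<otimes> h) + (\<lambda>g. \<Psi> (g, 0)) g) \<in> \<int>"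
      by simp
  qed
qed

end

abbreviation Z33 :: "(int \<times> int) monoid" where
  "Z33 \<equiv> integer_mod_group 3 \<times>\<times> integer_mod_group 3"

lemma Z33_group: "group Z33" by (simp add: DirProd_group)

lemma Z33_comm: "comm_group Z33"
proof -
  interpret Z: group Z33 by (rule Z33_group)
  show ?thesis by (rule Z.group_comm_groupI) (auto simp: mult_DirProd' add.commute)
qed

lemma (in group) sub_pow: "subgroup H G \<Longrightarrow> x \<in> H \<Longrightarrow> x [^] (n::nat) \<in> H"
  by (induction n) (auto simp: subgroup.one_closed subgroup.m_closed)

context G5f begin

definition phi :: "'a \<Rightarrow> int \<times> int" where
  "phi g = (int (fst (coord g)), int (fst (snd (coord g))))"

lemma phi_hom: "group_hom G Z33 phi"
proof -
  have "phi \<in> hom G Z33"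
  proof (rule homI)
    fix g assume g: "g \<in> carrier G"
    obtain a1 a2 a3 a4 a5 where c: "coord g = (a1,a2,a3,a4,a5)" by (cases "coord g") auto
    then show "phi g \<in> carrier Z33" using coord_V[OF g]
      by (simp add: phi_def V_def carrier_integer_mod_group)
  next
    fix g h assume g: "g \<in> carrier G" and h: "h \<in> carrier G"
    obtain a1 a2 a3 a4 a5 where ca: "coord g = (a1,a2,a3,a4,a5)" by (cases "coord g") auto
    obtain b1 b2 b3 b4 b5 where cb: "coord h = (b1,b2,b3,b4,b5)" by (cases "coord h") auto
    show "phi (g \<otimes> h) = phi g \<otimes>\<^bsub>Z33\<^esub> phi h"
      using coord_mul[OF g h] ca cb by (simp add: phi_def mu_def zmod_int)
  qed
  then show ?thesis
    by (intro group_hom.intro group_hom_axioms.intro is_group Z33_group)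
qed

lemma phi_surj: "phi ` carrier G = carrier Z33"
proof
  show "phi ` carrier G \<subseteq> carrier Z33" by (rule image_subsetI) (rule group_hom.hom_closed[OF phi_hom])
  show "carrier Z33 \<subseteq> phi ` carrier G"
  proof
    fix z assume z: "z \<in> carrier Z33"
    obtain i j where ij: "z = (i, j)" "0 \<le> i" "i < 3" "0 \<le> j" "j < 3"
      using z by (cases z) (auto simp: carrier_integer_mod_group)
    have "coord (W (nat i, nat j, 0, 0, 0)) = (nat i, nat j, 0, 0, 0)"
      using ij by (intro coordW) auto
    then have "phi (W (nat i, nat j, 0, 0, 0)) = z" using ij by (simp add: phi_def)
    then show "z \<in> phi ` carrier G" by (metis W_closed image_eqI)
  qed
qed

lemma abel_iso:
  assumes d3: "f3 \<in> derived G (carrier G)" and d4: "f4 \<in> derived G (carrier G)"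
    and d5: "f5 \<in> derived G (carrier G)"
  shows "G Mod (derived G (carrier G)) \<cong> Z33"
proof -
  interpret h: group_hom G Z33 phi by (rule phi_hom)
  have ker: "kernel G Z33 phi = derived G (carrier G)"
  proof
    have "phi ` derived G (carrier G) = derived Z33 (phi ` carrier G)"
      using h.derived_img[of "carrier G"] by simp
    also have "\<dots> = {\<one>\<^bsub>Z33\<^esub>}"
      using comm_group.derived_eq_singleton[OF Z33_comm] phi_surj by simp
    finally have "phi ` derived G (carrier G) = {\<one>\<^bsub>Z33\<^esub>}" .
    then show "derived G (carrier G) \<subseteq> kernel G Z33 phi"
      unfolding kernel_def using derived_in_carrier[of "carrier G"] by auto
  next
    show "kernel G Z33 phi \<subseteq> derived G (carrier G)"
    proof
      fix g assume g: "g \<in> kernel G Z33 phi"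
      then have gc: "g \<in> carrier G" and p: "phi g = (0, 0)" unfolding kernel_def by auto
      obtain a1 a2 a3 a4 a5 where ca: "coord g = (a1,a2,a3,a4,a5)" by (cases "coord g") auto
      have "a1 = 0" "a2 = 0" using p ca by (auto simp: phi_def)
      then have "g = f3 [^] a3 \<otimes> (f4 [^] a4 \<otimes> f5 [^] a5)"
        using W_coord[OF gc] ca cs by (simp add: W_def w_def)
      moreover have "subgroup (derived G (carrier G)) G" by (rule derived_is_subgroup) simp
      ultimately show "g \<in> derived G (carrier G)"
        using d3 d4 d5 by (simp add: subgroup.m_closed sub_pow)
    qed
  qed
  show ?thesis using h.FactGroup_iso[OF phi_surj] ker by simp
qed

end

lemma (in group) main_aux:
  fixes f1 f2 f3 f4 f5 :: 'a
  assumes fin: "finite (carrier G)"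
    and ord: "order G = 3 ^ 5"
    and mem: "f1 \<in> carrier G" "f2 \<in> carrier G" "f3 \<in> carrier G" "f4 \<in> carrier G" "f5 \<in> carrier G"
    and gen: "generate G {f1, f2, f3, f4, f5} = carrier G"
    and cent: "f5 \<in> center G"
    and c21: "comm G f2 f1 = f3"
    and c31: "comm G f3 f1 = f4"
    and c41: "comm G f4 f1 = f5"
    and c32: "comm G f3 f2 = f5"
    and c42: "comm G f4 f2 = \<one>\<^bsub>G\<^esub>"
    and c43: "comm G f4 f3 = \<one>\<^bsub>G\<^esub>"
    and pow: "(f1 [^]\<^bsub>G\<^esub> (3::nat) = \<one>\<^bsub>G\<^esub> \<and> f4 [^]\<^bsub>G\<^esub> (3::nat) = \<one>\<^bsub>G\<^esub> \<and>
               f5 [^]\<^bsub>G\<^esub> (3::nat) = \<one>\<^bsub>G\<^esub> \<and> f2 [^]\<^bsub>G\<^esub> (3::nat) = inv\<^bsub>G\<^esub> f4 \<and>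
               f3 [^]\<^bsub>G\<^esub> (3::nat) = inv\<^bsub>G\<^esub> f5)
            \<or> (f4 [^]\<^bsub>G\<^esub> (3::nat) = \<one>\<^bsub>G\<^esub> \<and> f5 [^]\<^bsub>G\<^esub> (3::nat) = \<one>\<^bsub>G\<^esub> \<and>
               f1 [^]\<^bsub>G\<^esub> (3::nat) = f5 \<and> f2 [^]\<^bsub>G\<^esub> (3::nat) = inv\<^bsub>G\<^esub> f4 \<and>
               f3 [^]\<^bsub>G\<^esub> (3::nat) = inv\<^bsub>G\<^esub> f5)
            \<or> (f4 [^]\<^bsub>G\<^esub> (3::nat) = \<one>\<^bsub>G\<^esub> \<and> f5 [^]\<^bsub>G\<^esub> (3::nat) = \<one>\<^bsub>G\<^esub> \<and>
               f1 [^]\<^bsub>G\<^esub> (3::nat) = inv\<^bsub>G\<^esub> f5 \<and> f3 [^]\<^bsub>G\<^esub> (3::nat) = inv\<^bsub>G\<^esub> f5 \<and>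
               f2 [^]\<^bsub>G\<^esub> (3::nat) = inv\<^bsub>G\<^esub> f4)"
  shows "B0_nontrivial G \<and>
         ((f1 [^]\<^bsub>G\<^esub> (3::nat) = \<one>\<^bsub>G\<^esub> \<and> f4 [^]\<^bsub>G\<^esub> (3::nat) = \<one>\<^bsub>G\<^esub> \<and>
           f5 [^]\<^bsub>G\<^esub> (3::nat) = \<one>\<^bsub>G\<^esub> \<and> f2 [^]\<^bsub>G\<^esub> (3::nat) = inv\<^bsub>G\<^esub> f4 \<and>
           f3 [^]\<^bsub>G\<^esub> (3::nat) = inv\<^bsub>G\<^esub> f5)
          \<longrightarrow> G Mod (derived G (carrier G)) \<cong> (integer_mod_group 3 \<times>\<times> integer_mod_group 3))"
proof -
  have grp: "group G" by (rule is_group)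
  have comm_lem: "x \<otimes> y = y \<otimes> (x \<otimes> z)" if "x \<in> carrier G" "y \<in> carrier G" "comm G x y = z" for x y z
  proof -
    have "y \<otimes> (x \<otimes> z) = y \<otimes> (x \<otimes> (inv x \<otimes> (inv y \<otimes> (x \<otimes> y))))"
      using that by (simp add: comm_def m_assoc)
    also have "\<dots> = x \<otimes> y" using that by (simp add: m_assoc[symmetric] r_inv)
    finally show ?thesis by simp
  qed
  have R21: "f2 \<otimes> f1 = f1 \<otimes> (f2 \<otimes> f3)" using comm_lem[OF mem(2) mem(1) c21] .
  have R31: "f3 \<otimes> f1 = f1 \<otimes> (f3 \<otimes> f4)" using comm_lem[OF mem(3) mem(1) c31] .
  have R41: "f4 \<otimes> f1 = f1 \<otimes> (f4 \<otimes> f5)" using comm_lem[OF mem(4) mem(1) c41] .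
  have R32: "f3 \<otimes> f2 = f2 \<otimes> (f3 \<otimes> f5)" using comm_lem[OF mem(3) mem(2) c32] .
  have R42: "f4 \<otimes> f2 = f2 \<otimes> f4" using comm_lem[OF mem(4) mem(2) c42] mem by simp
  have R43: "f4 \<otimes> f3 = f3 \<otimes> f4" using comm_lem[OF mem(4) mem(3) c43] mem by simp
  have Z5: "f5 \<otimes> x = x \<otimes> f5" if "x \<in> carrier G" for x using cent that unfolding center_def by auto
  have inv3: "inv x = x [^] (2::nat)" if "x \<in> carrier G" "x [^] (3::nat) = \<one>" for x
  proof -
    have "x [^] (2::nat) \<otimes> x = x [^] (3::nat)" using that by (simp add: numeral_3_eq_3 numeral_2_eq_2)
    then have "x [^] (2::nat) \<otimes> x = \<one>" using that by simp
    then show ?thesis using that by (metis inv_equality nat_pow_closed)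
  qed
  have P4: "f4 [^] (3::nat) = \<one>" and P5: "f5 [^] (3::nat) = \<one>" using pow by auto
  have P2: "f2 [^] (3::nat) = f4 [^] (2::nat)" using pow inv3[OF mem(4) P4] by auto
  have P3: "f3 [^] (3::nat) = f5 [^] (2::nat)" using pow inv3[OF mem(5) P5] by auto
  obtain e :: nat where P1: "f1 [^] (3::nat) = f5 [^] e"
  proof -
    consider "f1 [^] (3::nat) = \<one>" | "f1 [^] (3::nat) = f5" | "f1 [^] (3::nat) = inv f5" using pow by blast
    then show ?thesis
    proof cases
      case 1 then show ?thesis using that[of 0] by simp
    next
      case 2 then show ?thesis using that[of 1] mem by simp
    next
      case 3 then show ?thesis using that[of 2] inv3[OF mem(5) P5] by simp
    qed
  qed
  have card: "card (carrier G) = 243" using ord by (simp add: order_def)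
  interpret L: G5f G f1 f2 f3 f4 f5 e
    by (intro G5f.intro G5.intro G5_axioms.intro G5f_axioms.intro grp mem R21 R31 R41 R32 R42 R43 Z5 P1 P2 P3 P4 P5 fin card gen)
  have B0: "B0_nontrivial G"
    unfolding B0_nontrivial_def
  proof (intro exI conjI allI impI)
    show "cocycle2 G L.cc" by (rule L.cocycle)
    show "\<not> coboundary_on G (carrier G) L.cc" by (rule L.not_cob)
    fix A assume "subgroup A G \<and> bicyclic G A"
    then obtain a b where "subgroup A G" "a \<in> carrier G" "b \<in> carrier G" "a \<otimes> b = b \<otimes> a"
      "generate G {a} \<inter> generate G {b} = {\<one>}" "A = generate G {a} <#> generate G {b}"
      unfolding bicyclic_def by blast
    then show "coboundary_on G A L.cc" using L.bic by blast
  qed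
  have dset: "comm G x y \<in> derived G (carrier G)" if "x \<in> carrier G" "y \<in> carrier G" for x y
  proof -
    have "comm G x y = inv x \<otimes> inv y \<otimes> inv (inv x) \<otimes> inv (inv y)" using that by (simp add: comm_def)
    then have "comm G x y \<in> derived_set G (carrier G)" using that by blast
    then show ?thesis unfolding derived_def by (rule generate.incl)
  qed
  have "G Mod (derived G (carrier G)) \<cong> (integer_mod_group 3 \<times>\<times> integer_mod_group 3)"
    using L.abel_iso dset[OF mem(2) mem(1)] dset[OF mem(3) mem(1)] dset[OF mem(4) mem(1)] c21 c31 c41 by simp
  then show ?thesis using B0 by simp
qed


theorem mainTheorem5:
  fixes G :: "('a, 'b) monoid_scheme" and f1 f2 f3 f4 f5 :: 'a
  assumes grp: "group G"
    and fin: "finite (carrier G)"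
    and ord: "order G = 3 ^ 5"
    and mem: "f1 \<in> carrier G" "f2 \<in> carrier G" "f3 \<in> carrier G" "f4 \<in> carrier G" "f5 \<in> carrier G"
    and gen: "generate G {f1, f2, f3, f4, f5} = carrier G"
    and cent: "f5 \<in> center G"
    and c21: "comm G f2 f1 = f3"
    and c31: "comm G f3 f1 = f4"
    and c41: "comm G f4 f1 = f5"
    and c32: "comm G f3 f2 = f5"
    and c42: "comm G f4 f2 = \<one>\<^bsub>G\<^esub>"
    and c43: "comm G f4 f3 = \<one>\<^bsub>G\<^esub>"
    and pow: "(f1 [^]\<^bsub>G\<^esub> (3::nat) = \<one>\<^bsub>G\<^esub> \<and> f4 [^]\<^bsub>G\<^esub> (3::nat) = \<one>\<^bsub>G\<^esub> \<and>
               f5 [^]\<^bsub>G\<^esub> (3::nat) = \<one>\<^bsub>G\<^esub> \<and> f2 [^]\<^bsub>G\<^esub> (3::nat) = inv\<^bsub>G\<^esub> f4 \<and>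
               f3 [^]\<^bsub>G\<^esub> (3::nat) = inv\<^bsub>G\<^esub> f5)
            \<or> (f4 [^]\<^bsub>G\<^esub> (3::nat) = \<one>\<^bsub>G\<^esub> \<and> f5 [^]\<^bsub>G\<^esub> (3::nat) = \<one>\<^bsub>G\<^esub> \<and>
               f1 [^]\<^bsub>G\<^esub> (3::nat) = f5 \<and> f2 [^]\<^bsub>G\<^esub> (3::nat) = inv\<^bsub>G\<^esub> f4 \<and>
               f3 [^]\<^bsub>G\<^esub> (3::nat) = inv\<^bsub>G\<^esub> f5)
            \<or> (f4 [^]\<^bsub>G\<^esub> (3::nat) = \<one>\<^bsub>G\<^esub> \<and> f5 [^]\<^bsub>G\<^esub> (3::nat) = \<one>\<^bsub>G\<^esub> \<and>
               f1 [^]\<^bsub>G\<^esub> (3::nat) = inv\<^bsub>G\<^esub> f5 \<and> f3 [^]\<^bsub>G\<^esub> (3::nat) = inv\<^bsub>G\<^esub> f5 \<and>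
               f2 [^]\<^bsub>G\<^esub> (3::nat) = inv\<^bsub>G\<^esub> f4)"
  shows "B0_nontrivial G \<and>
         ((f1 [^]\<^bsub>G\<^esub> (3::nat) = \<one>\<^bsub>G\<^esub> \<and> f4 [^]\<^bsub>G\<^esub> (3::nat) = \<one>\<^bsub>G\<^esub> \<and>
           f5 [^]\<^bsub>G\<^esub> (3::nat) = \<one>\<^bsub>G\<^esub> \<and> f2 [^]\<^bsub>G\<^esub> (3::nat) = inv\<^bsub>G\<^esub> f4 \<and>
           f3 [^]\<^bsub>G\<^esub> (3::nat) = inv\<^bsub>G\<^esub> f5)
          \<longrightarrow> G Mod (derived G (carrier G)) \<cong> (integer_mod_group 3 \<times>\<times> integer_mod_group 3))"
  by (rule group.main_aux[OF grp fin ord mem gen cent c21 c31 c41 c32 c42 c43 pow])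


end
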